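(* Let $\mathcal X=\{x_{n,k}\}$ be a Marcinkiewicz–Zygmund family on $\mathbb T$ with weights $\tau=\{\tau_{n,k}\}$ and constants $A,B>0$ (as in the context). Let $f\in C(\mathbb T)$, $n\in\mathbb N$, let $P_nf=\sum_{|k|\le n}\hat f(k)e^{2\pi ikx}$ be the orthogonal projection of $f$ onto $\mathcal T_n$, and let $p_n=\operatorname{argmin}_{p\in\mathcal T_n}\sum_{k=1}^{L_n}|f(x_{n,k})-p(x_{n,k})|^2\tau_{n,k}$. Then $$\|P_nf-p_n\|_2^2\le A^{-2}B\sum_{k=1}^{L_n}|f(x_{n,k})-P_nf(x_{n,k})|^2\tau_{n,k}.$$
   Context: $\mathbb T=\mathbb R/\mathbb Z$, identified with $(-1/2,1/2]$, with Lebesgue measure; $\|\cdot\|_2$ is the $L^2(\mathbb T)$-norm. $\mathcal T_n$ is the space of trigonometric polynomials $\sum_{k=-n}^n c_ke^{2\pi ikx}$; $\hat f(k)=\int_0^1 f(x)e^{-2\pi ikx}dx$. A doubly-indexed set $\mathcal X=\{x_{n,k}: n\in\mathbb N, k=1,\dots,L_n\}\subseteq\mathbb T$ with weights $\tau_{n,k}>0$ is a Marcinkiewicz–Zygmund family if there are constants $A,B>0$ independent of $n$ with $A\|p\|_2^2\le\sum_{k=1}^{L_n}|p(x_{n,k})|^2\tau_{n,k}\le B\|p\|_2^2$ for all $p\in\mathcal T_n$, $n\in\mathbb N$. *)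

theory Defs
  imports "HOL-Analysis.Analysis"
begin

text \<open>Functions on the torus are modelled as 1-periodic functions real => complex.\<close>

definition trig_poly :: "nat \<Rightarrow> (real \<Rightarrow> complex) \<Rightarrow> bool" where
  "trig_poly n p \<longleftrightarrow> (\<exists>c :: int \<Rightarrow> complex.
     p = (\<lambda>x. \<Sum>k\<in>{-int n..int n}. c k * exp (2 * of_real pi * \<i> * of_int k * of_real x)))"

definition fourier_coeff :: "(real \<Rightarrow> complex) \<Rightarrow> int \<Rightarrow> complex" where
  "fourier_coeff f k = integral {0..1} (\<lambda>x. f x * exp (- (2 * of_real pi * \<i> * of_int k * of_real x)))"

definition fourier_proj :: "nat \<Rightarrow> (real \<Rightarrow> complex) \<Rightarrow> real \<Rightarrow> complex" where
  "fourier_proj n f = (\<lambda>x. \<Sum>k\<in>{-int n..int n}. fourier_coeff f k * exp (2 * of_real pi * \<i> * of_int k * of_real x))"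

definition l2_norm_sq :: "(real \<Rightarrow> complex) \<Rightarrow> real" where
  "l2_norm_sq g = integral {0..1} (\<lambda>x. (cmod (g x))\<^sup>2)"

definition MZ_family :: "(nat \<Rightarrow> nat \<Rightarrow> real) \<Rightarrow> (nat \<Rightarrow> nat \<Rightarrow> real) \<Rightarrow> (nat \<Rightarrow> nat)
    \<Rightarrow> real \<Rightarrow> real \<Rightarrow> bool" where
  "MZ_family X \<tau> L A B \<longleftrightarrow> A > 0 \<and> B > 0 \<and>
     (\<forall>n\<ge>1. \<forall>k\<in>{1..L n}. \<tau> n k > 0 \<and> X n k \<in> {-1/2<..1/2}) \<and>
     (\<forall>n\<ge>1. \<forall>p. trig_poly n p \<longrightarrow>
        A * l2_norm_sq p \<le> (\<Sum>k=1..L n. (cmod (p (X n k)))\<^sup>2 * \<tau> n k) \<and>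
        (\<Sum>k=1..L n. (cmod (p (X n k)))\<^sup>2 * \<tau> n k) \<le> B * l2_norm_sq p)"

end

theory Submission
  imports Defs
begin

lemma cmod_sq_expand:
  fixes r d :: complex and t :: real
  shows "(cmod (r - of_real t * d))\<^sup>2 = (cmod r)\<^sup>2 - 2 * t * Re (r * cnj d) + t\<^sup>2 * (cmod d)\<^sup>2"
  unfolding cmod_power2 by (simp add: power2_eq_square algebra_simps)

lemma trig_poly_comb:
  assumes "trig_poly n p" "trig_poly n q"
  shows "trig_poly n (\<lambda>x. p x + of_real t * (q x - p x))"
proof -
  obtain c where c: "p = (\<lambda>x. \<Sum>k\<in>{-int n..int n}. c k * exp (2 * of_real pi * \<i> * of_int k * of_real x))"
    using assms(1) unfolding trig_poly_def by blast
  obtain e where e: "q = (\<lambda>x. \<Sum>k\<in>{-int n..int n}. e k * exp (2 * of_real pi * \<i> * of_int k * of_real x))"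
    using assms(2) unfolding trig_poly_def by blast
  define E where "E = (\<lambda>k x. exp (2 * of_real pi * \<i> * of_int k * of_real x) :: complex)"
  have "(\<Sum>k\<in>{-int n..int n}. (c k + of_real t * (e k - c k)) * E k x)
     = (\<Sum>k\<in>{-int n..int n}. c k * E k x) + of_real t * ((\<Sum>k\<in>{-int n..int n}. e k * E k x) - (\<Sum>k\<in>{-int n..int n}. c k * E k x))" for x
    by (simp add: distrib_right right_diff_distrib left_diff_distrib sum.distrib sum_subtractf sum_distrib_left mult.assoc)
  then show ?thesis unfolding trig_poly_def
    by (intro exI[of _ "\<lambda>k. c k + of_real t * (e k - c k)"]) (simp add: c e E_def fun_eq_iff)
qed

lemma trig_poly_diff:
  assumes "trig_poly n p" "trig_poly n q"
  shows "trig_poly n (\<lambda>x. q x - p x)"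
proof -
  obtain c where c: "p = (\<lambda>x. \<Sum>k\<in>{-int n..int n}. c k * exp (2 * of_real pi * \<i> * of_int k * of_real x))"
    using assms(1) unfolding trig_poly_def by blast
  obtain e where e: "q = (\<lambda>x. \<Sum>k\<in>{-int n..int n}. e k * exp (2 * of_real pi * \<i> * of_int k * of_real x))"
    using assms(2) unfolding trig_poly_def by blast
  show ?thesis unfolding trig_poly_def
    by (intro exI[of _ "\<lambda>k. e k - c k"]) (simp add: c e fun_eq_iff left_diff_distrib sum_subtractf)
qed

lemma trig_poly_proj: "trig_poly n (fourier_proj n f)"
  unfolding trig_poly_def fourier_proj_def by blast

lemma trig_poly_one: "trig_poly n (\<lambda>x. 1)"
proof -
  have "(\<Sum>k\<in>{-int n..int n}. (if k = 0 then 1 else 0) * exp (2 * of_real pi * \<i> * of_int k * of_real x))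
      = (1::complex)" for x
  proof -
    have eq: "(\<lambda>k. (if k = 0 then 1 else 0) * exp (2 * of_real pi * \<i> * of_int k * of_real x))
        = (\<lambda>k::int. if k = 0 then exp (2 * of_real pi * \<i> * of_int k * of_real x) else (0::complex))"
      by auto
    show ?thesis by (subst eq) (simp add: sum.delta)
  qed
  then show ?thesis unfolding trig_poly_def
    by (intro exI[of _ "\<lambda>k. if k = 0 then 1 else 0"]) (simp add: fun_eq_iff)
qed

theorem proposition2p5:
  fixes X \<tau> :: "nat \<Rightarrow> nat \<Rightarrow> real" and L :: "nat \<Rightarrow> nat" and A B :: real
    and f pn :: "real \<Rightarrow> complex" and n :: nat
  assumes MZ: "MZ_family X \<tau> L A B"
    and f_cont: "continuous_on UNIV f"
    and f_per: "\<forall>x. f (x + 1) = f x"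
    and n: "n \<ge> 1"
    and pn_poly: "trig_poly n pn"
    and pn_min: "\<forall>p. trig_poly n p \<longrightarrow>
        (\<Sum>k=1..L n. (cmod (f (X n k) - pn (X n k)))\<^sup>2 * \<tau> n k)
          \<le> (\<Sum>k=1..L n. (cmod (f (X n k) - p (X n k)))\<^sup>2 * \<tau> n k)"
  shows "l2_norm_sq (\<lambda>x. fourier_proj n f x - pn x)
     \<le> B / A\<^sup>2 * (\<Sum>k=1..L n. (cmod (f (X n k) - fourier_proj n f (X n k)))\<^sup>2 * \<tau> n k)"
proof -
  define q where "q = fourier_proj n f"
  define K where "K = {1..L n}"
  have A: "A > 0" and B: "B > 0" using MZ unfolding MZ_family_def by auto
  have tau: "\<And>k. k \<in> K \<Longrightarrow> \<tau> n k > 0" using MZ n unfolding MZ_family_def K_def by auto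
  have MZb: "\<And>p. trig_poly n p \<Longrightarrow> A * l2_norm_sq p \<le> (\<Sum>k\<in>K. (cmod (p (X n k)))\<^sup>2 * \<tau> n k)
       \<and> (\<Sum>k\<in>K. (cmod (p (X n k)))\<^sup>2 * \<tau> n k) \<le> B * l2_norm_sq p"
    using MZ n unfolding MZ_family_def K_def by blast
  have qp: "trig_poly n q" unfolding q_def by (rule trig_poly_proj)
  define r where "r = (\<lambda>k. f (X n k) - pn (X n k))"
  define d where "d = (\<lambda>k. q (X n k) - pn (X n k))"
  define a where "a = (\<Sum>k\<in>K. Re (r k * cnj (d k)) * \<tau> n k)"
  define b where "b = (\<Sum>k\<in>K. (cmod (d k))\<^sup>2 * \<tau> n k)"
  define s where "s = (\<Sum>k\<in>K. (cmod (r k))\<^sup>2 * \<tau> n k)"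
  have b0: "b \<ge> 0" unfolding b_def using tau by (intro sum_nonneg) (simp add: less_imp_le)
  have s0: "s \<ge> 0" unfolding s_def using tau by (intro sum_nonneg) (simp add: less_imp_le)
  have expand: "(\<Sum>k\<in>K. (cmod (f (X n k) - (pn (X n k) + of_real t * (q (X n k) - pn (X n k)))))\<^sup>2 * \<tau> n k)
      = s - 2 * t * a + t\<^sup>2 * b" for t
  proof -
    have "(\<Sum>k\<in>K. (cmod (f (X n k) - (pn (X n k) + of_real t * (q (X n k) - pn (X n k)))))\<^sup>2 * \<tau> n k)
        = (\<Sum>k\<in>K. ((cmod (r k))\<^sup>2 - 2 * t * Re (r k * cnj (d k)) + t\<^sup>2 * (cmod (d k))\<^sup>2) * \<tau> n k)"
    proof (rule sum.cong[OF refl])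
      fix k
      have "f (X n k) - (pn (X n k) + of_real t * (q (X n k) - pn (X n k))) = r k - of_real t * d k"
        unfolding r_def d_def by simp
      then show "(cmod (f (X n k) - (pn (X n k) + of_real t * (q (X n k) - pn (X n k)))))\<^sup>2 * \<tau> n k
          = ((cmod (r k))\<^sup>2 - 2 * t * Re (r k * cnj (d k)) + t\<^sup>2 * (cmod (d k))\<^sup>2) * \<tau> n k"
        using cmod_sq_expand[of "r k" t "d k"] by simp
    qed
    also have "\<dots> = s - 2 * t * a + t\<^sup>2 * b"
      unfolding s_def a_def b_def
      by (simp add: algebra_simps sum.distrib sum_subtractf sum_distrib_left)
    finally show ?thesis .
  qed
  have ineq: "s \<le> s - 2 * t * a + t\<^sup>2 * b" for t
  proof -
    have "trig_poly n (\<lambda>x. pn x + of_real t * (q x - pn x))" by (rule trig_poly_comb[OF pn_poly qp])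
    then have "s \<le> (\<Sum>k\<in>K. (cmod (f (X n k) - (pn (X n k) + of_real t * (q (X n k) - pn (X n k)))))\<^sup>2 * \<tau> n k)"
      using pn_min unfolding s_def r_def K_def by blast
    then show ?thesis using expand by simp
  qed
  have a0: "a = 0"
  proof -
    have "s \<le> s - 2 * (a / (b+1)) * a + (a / (b+1))\<^sup>2 * b" by (rule ineq)
    then have h: "2 * (a / (b+1)) * a \<le> (a / (b+1))\<^sup>2 * b" by simp
    define u where "u = a / (b+1)"
    have au: "a = u * (b+1)" unfolding u_def using b0 by simp
    have "2 * u * (u * (b+1)) \<le> u\<^sup>2 * b" using h au unfolding u_def[symmetric] by simp
    then have "u\<^sup>2 * (b + 2) \<le> 0" by (simp add: power2_eq_square algebra_simps)
    moreover have "u\<^sup>2 * (b + 2) \<ge> 0" using b0 by simp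
    ultimately have "u\<^sup>2 * (b + 2) = 0" by linarith
    then have "u = 0" using b0 by simp
    then have "a * a = 0" using au by simp
    then show ?thesis by simp
  qed
  have fq: "(\<Sum>k\<in>K. (cmod (f (X n k) - q (X n k)))\<^sup>2 * \<tau> n k) = s - 2 * 1 * a + 1\<^sup>2 * b"
    using expand[of 1] by simp
  have dpoly: "trig_poly n (\<lambda>x. q x - pn x)" by (rule trig_poly_diff[OF pn_poly qp])
  have l1: "A * l2_norm_sq (\<lambda>x. q x - pn x) \<le> b"
    using MZb[OF dpoly] unfolding b_def d_def by simp
  have l2: "b \<le> (\<Sum>k\<in>K. (cmod (f (X n k) - q (X n k)))\<^sup>2 * \<tau> n k)"
    using fq a0 s0 by simp
  have one: "l2_norm_sq (\<lambda>x. 1) = 1" unfolding l2_norm_sq_def by simp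
  have AB: "A \<le> B" using MZb[OF trig_poly_one] unfolding one by linarith
  define S where "S = (\<Sum>k\<in>K. (cmod (f (X n k) - q (X n k)))\<^sup>2 * \<tau> n k)"
  have S0: "S \<ge> 0" using b0 l2 S_def by simp
  have "l2_norm_sq (\<lambda>x. q x - pn x) \<le> S / A"
    using l1 l2 A unfolding S_def by (simp add: field_simps mult.commute)
  also have "S / A \<le> B / A\<^sup>2 * S"
  proof -
    have "S / A = (A / A\<^sup>2) * S" using A by (simp add: power2_eq_square)
    also have "\<dots> \<le> B / A\<^sup>2 * S" using AB S0 A
      by (intro mult_right_mono divide_right_mono) auto
    finally show ?thesis .
  qed
  finally show ?thesis unfolding S_def q_def K_def .
qed

end
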